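(* Let $\mathcal{T}$ be a finite tree, $w:V(\mathcal{T})\to\mathbb{R}_{\ge0}$, $m=w(\mathcal{T})$, $\alpha\in[\tfrac13,\tfrac12]$, and let $c$ be an $\alpha$-centroid of $(\mathcal{T},w)$. Then $$\mathtt{OPT}(\mathcal{T},w)\ge(2-3\alpha)m+(3\alpha-1)w(c)+\sum_{\mathcal{H}\in\mathbb{C}(\mathcal{T}-c)}\mathtt{OPT}(\mathcal{H},w).$$
   Context: $\mathbb{C}(G)$ denotes the set of connected components of a graph $G$. For a subgraph $\mathcal{H}$, $w(\mathcal{H})=\sum_{x\in V(\mathcal{H})}w(x)$, and $w$ also denotes its restriction to $V(\mathcal{H})$. A search tree on a tree $\mathcal{T}$ is a rooted tree $T$ with vertex set $V(\mathcal{T})$ defined recursively: its root is an arbitrary vertex $r$, and the children of $r$ are the roots of search trees built on the connected components of $\mathcal{T}-r$; a single-vertex tree has only itself as search tree. $\mathtt{cost}_w(T)=\sum_x w(x)\,\mathtt{depth}_T(x)$ with root depth $1$; $\mathtt{OPT}(\mathcal{T},w)$ is the minimum cost over all search trees on $\mathcal{T}$. A vertex $v$ is an $\alpha$-centroid of $(\mathcal{T},w)$ if every component $\mathcal{H}$ of $\mathcal{T}-v$ has $w(\mathcal{H})\le\alpha\,w(\mathcal{T})$. *)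

theory Defs
  imports Complex_Main
begin

text \<open>Graphs: a symmetric irreflexive edge relation E on vertices of type 'a; a
  (sub)graph is given by its finite vertex set S, taking the subgraph induced by E.\<close>

definition reach_in :: "('a \<Rightarrow> 'a \<Rightarrow> bool) \<Rightarrow> 'a set \<Rightarrow> 'a \<Rightarrow> 'a \<Rightarrow> bool" where
  "reach_in E S = (\<lambda>x y. E x y \<and> x \<in> S \<and> y \<in> S)\<^sup>*\<^sup>*"

definition connected_in :: "('a \<Rightarrow> 'a \<Rightarrow> bool) \<Rightarrow> 'a set \<Rightarrow> bool" where
  "connected_in E S \<longleftrightarrow> (\<forall>x\<in>S. \<forall>y\<in>S. reach_in E S x y)"

definition comps :: "('a \<Rightarrow> 'a \<Rightarrow> bool) \<Rightarrow> 'a set \<Rightarrow> 'a set set" where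
  "comps E S = (\<lambda>x. {y. reach_in E S x y}) ` S"

definition has_cycle_in :: "('a \<Rightarrow> 'a \<Rightarrow> bool) \<Rightarrow> 'a set \<Rightarrow> bool" where
  "has_cycle_in E S \<longleftrightarrow> (\<exists>vs. length vs \<ge> 3 \<and> distinct vs \<and> set vs \<subseteq> S \<and>
      (\<forall>i < length vs - 1. E (vs ! i) (vs ! Suc i)) \<and> E (last vs) (hd vs))"

definition is_tree :: "('a \<Rightarrow> 'a \<Rightarrow> bool) \<Rightarrow> 'a set \<Rightarrow> bool" where
  "is_tree E S \<longleftrightarrow> finite S \<and> S \<noteq> {} \<and> connected_in E S \<and> \<not> has_cycle_in E S"

datatype 'a stree = Node 'a "'a stree list"

fun svs :: "'a stree \<Rightarrow> 'a set" where
  "svs (Node r ts) = insert r (\<Union>t\<in>set ts. svs t)"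

inductive is_search_tree :: "('a \<Rightarrow> 'a \<Rightarrow> bool) \<Rightarrow> 'a set \<Rightarrow> 'a stree \<Rightarrow> bool" where
  "\<lbrakk> r \<in> S; distinct (map svs ts); set (map svs ts) = comps E (S - {r});
     \<forall>t\<in>set ts. is_search_tree E (svs t) t \<rbrakk> \<Longrightarrow> is_search_tree E S (Node r ts)"

text \<open>Vertices with their depths (root has depth 1).\<close>
fun depths :: "'a stree \<Rightarrow> ('a \<times> nat) list" where
  "depths (Node r ts) = (r, 1) # concat (map (\<lambda>t. map (\<lambda>(x, d). (x, Suc d)) (depths t)) ts)"

definition cost :: "('a \<Rightarrow> real) \<Rightarrow> 'a stree \<Rightarrow> real" where
  "cost w T = sum_list (map (\<lambda>(x, d). w x * real d) (depths T))"

definition OPT :: "('a \<Rightarrow> 'a \<Rightarrow> bool) \<Rightarrow> 'a set \<Rightarrow> ('a \<Rightarrow> real) \<Rightarrow> real" where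
  "OPT E S w = Inf {cost w T | T. is_search_tree E S T}"

definition wsum :: "('a \<Rightarrow> real) \<Rightarrow> 'a set \<Rightarrow> real" where
  "wsum w S = (\<Sum>x\<in>S. w x)"

definition is_centroid :: "real \<Rightarrow> ('a \<Rightarrow> 'a \<Rightarrow> bool) \<Rightarrow> 'a set \<Rightarrow> ('a \<Rightarrow> real) \<Rightarrow> 'a \<Rightarrow> bool" where
  "is_centroid \<alpha> E S w v \<longleftrightarrow> v \<in> S \<and> (\<forall>H \<in> comps E (S - {v}). wsum w H \<le> \<alpha> * wsum w S)"

end

theory Submission
  imports Defs
begin


lemma reach_refl[simp]: "reach_in E S x x"
  by (simp add: reach_in_def)

lemma reach_step: "reach_in E S x y \<Longrightarrow> E y z \<Longrightarrow> y \<in> S \<Longrightarrow> z \<in> S \<Longrightarrow> reach_in E S x z"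
  unfolding reach_in_def by (simp add: rtranclp.rtrancl_into_rtrancl)

lemma reach_trans: "reach_in E S x y \<Longrightarrow> reach_in E S y z \<Longrightarrow> reach_in E S x z"
  unfolding reach_in_def by (rule rtranclp_trans)

lemma reach_mono: "S \<subseteq> S' \<Longrightarrow> reach_in E S x y \<Longrightarrow> reach_in E S' x y"
  unfolding reach_in_def
  by (erule rtranclp.induct) (auto intro: rtranclp.rtrancl_into_rtrancl)

lemma reach_mem: "reach_in E S x y \<Longrightarrow> y \<noteq> x \<Longrightarrow> y \<in> S"
  unfolding reach_in_def by (induction rule: rtranclp_induct) auto

lemma reach_induct[consumes 1, case_names base step]:
  assumes "reach_in E S x y" "P x"
    "\<And>y z. reach_in E S x y \<Longrightarrow> P y \<Longrightarrow> E y z \<Longrightarrow> y \<in> S \<Longrightarrow> z \<in> S \<Longrightarrow> P z"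
  shows "P y"
  using assms(1) unfolding reach_in_def
proof (induction rule: rtranclp_induct)
  case base then show ?case using assms(2) by simp
next
  case (step y z) then show ?case using assms(3)[of y z] by (simp add: reach_in_def)
qed

definition comp_of :: "('a \<Rightarrow> 'a \<Rightarrow> bool) \<Rightarrow> 'a set \<Rightarrow> 'a \<Rightarrow> 'a set" where
  "comp_of E S x = {y. reach_in E S x y}"

lemma comps_def': "comps E S = comp_of E S ` S"
  by (simp add: comps_def comp_of_def)

lemma comp_of_self[simp]: "x \<in> comp_of E S x"
  by (simp add: comp_of_def)

lemma comp_of_sub: "x \<in> S \<Longrightarrow> comp_of E S x \<subseteq> S"
  by (auto simp: comp_of_def dest: reach_mem)

lemma comps_finite: "finite S \<Longrightarrow> finite (comps E S)"
  by (simp add: comps_def)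

lemma comps_sub: "K \<in> comps E S \<Longrightarrow> K \<subseteq> S"
  by (auto simp: comps_def' dest: comp_of_sub)

lemma comps_ne: "K \<in> comps E S \<Longrightarrow> K \<noteq> {}"
  by (metis comps_def' comp_of_self empty_iff imageE)

lemma comps_Union: "\<Union>(comps E S) = S"
  apply (rule equalityI)
  using comps_sub apply blast
  apply (auto simp: comps_def')
  done

lemma comps_empty[simp]: "comps E {} = {}"
  by (simp add: comps_def)

lemma comps_closed: "K \<in> comps E S \<Longrightarrow> x \<in> K \<Longrightarrow> y \<in> S \<Longrightarrow> E x y \<Longrightarrow> y \<in> K"
  apply (frule comps_sub)
  apply (clarsimp simp: comps_def' comp_of_def)
  apply (rule reach_step, assumption+)
   apply blast+
  done

lemma connected_sub_comp: "connected_in E Z \<Longrightarrow> Z \<subseteq> A \<Longrightarrow> z \<in> Z \<Longrightarrow> Z \<subseteq> comp_of E A z"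
  by (auto simp: connected_in_def comp_of_def intro: reach_mono)

context
  fixes E :: "'a \<Rightarrow> 'a \<Rightarrow> bool"
  assumes symE: "\<And>x y. E x y \<Longrightarrow> E y x"
begin

lemma reach_sym: "reach_in E S x y \<Longrightarrow> reach_in E S y x"
  unfolding reach_in_def
proof (induction rule: rtranclp_induct)
  case base then show ?case by simp
next
  case (step y z)
  then show ?case
    by (metis (mono_tags, lifting) converse_rtranclp_into_rtranclp symE)
qed

lemma comp_of_eq: "y \<in> comp_of E S x \<Longrightarrow> comp_of E S y = comp_of E S x"
proof -
  assume "y \<in> comp_of E S x"
  then have xy: "reach_in E S x y" by (simp add: comp_of_def)
  then have yx: "reach_in E S y x" by (rule reach_sym)
  show ?thesis unfolding comp_of_def
    using reach_trans[OF xy] reach_trans[OF yx] by blast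
qed

lemma comps_disj: "K \<in> comps E S \<Longrightarrow> K' \<in> comps E S \<Longrightarrow> K \<noteq> K' \<Longrightarrow> K \<inter> K' = {}"
proof -
  assume K: "K \<in> comps E S" and K': "K' \<in> comps E S" and ne: "K \<noteq> K'"
  obtain a where a: "K = comp_of E S a" using K by (auto simp: comps_def')
  obtain b where b: "K' = comp_of E S b" using K' by (auto simp: comps_def')
  show ?thesis
  proof (rule ccontr)
    assume "K \<inter> K' \<noteq> {}"
    then obtain z where "z \<in> K" "z \<in> K'" by blast
    then have "comp_of E S z = K" "comp_of E S z = K'"
      using comp_of_eq[of z S a] comp_of_eq[of z S b] a b by simp_all
    then show False using ne by simp
  qed
qed

lemma reach_in_comp: "reach_in E S x y \<Longrightarrow> reach_in E (comp_of E S x) x y"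
proof (induction rule: reach_induct)
  case base then show ?case by simp
next
  case (step y z)
  have "y \<in> comp_of E S x" using step(1) by (simp add: comp_of_def)
  moreover have "z \<in> comp_of E S x" using step reach_step[of E S x y z] by (simp add: comp_of_def)
  ultimately show ?case using step by (simp add: reach_step)
qed

lemma comp_of_connected: "connected_in E (comp_of E S x)"
  unfolding connected_in_def
proof (intro ballI)
  fix y z assume "y \<in> comp_of E S x" "z \<in> comp_of E S x"
  then have "reach_in E (comp_of E S x) x y" "reach_in E (comp_of E S x) x z"
    by (simp_all add: comp_of_def reach_in_comp[unfolded comp_of_def])
  then show "reach_in E (comp_of E S x) y z" by (metis reach_sym reach_trans)
qed

lemma comps_connected: "K \<in> comps E S \<Longrightarrow> connected_in E K"
  by (auto simp: comps_def' intro: comp_of_connected)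

lemma comps_connected_self: "connected_in E H \<Longrightarrow> H \<noteq> {} \<Longrightarrow> comps E H = {H}"
proof -
  assume c: "connected_in E H" and ne: "H \<noteq> {}"
  have "comp_of E H x = H" if "x \<in> H" for x
    using comp_of_sub[OF that] connected_sub_comp[OF c _ that] by blast
  then show ?thesis using ne by (auto simp: comps_def')
qed

lemma comp_of_restrict:
  assumes "Y \<subseteq> A" "y \<in> Y"
  shows "comp_of E Y y = comp_of E (Y \<inter> comp_of E A y) y"
proof
  show "comp_of E (Y \<inter> comp_of E A y) y \<subseteq> comp_of E Y y"
    by (auto simp: comp_of_def intro: reach_mono)
next
  have "reach_in E Y y z \<Longrightarrow> reach_in E (Y \<inter> comp_of E A y) y z" for z
  proof (induction rule: reach_induct)
    case base then show ?case by simp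
  next
    case (step u v)
    have u: "u \<in> comp_of E A y"
      using reach_mem[OF step.IH] by (cases "u = y") auto
    have "reach_in E A y u" using u by (simp add: comp_of_def)
    then have "reach_in E A y v" using step assms(1) by (auto intro: reach_step)
    then have "v \<in> comp_of E A y" by (simp add: comp_of_def)
    then show ?case using step u by (auto intro: reach_step)
  qed
  then show "comp_of E Y y \<subseteq> comp_of E (Y \<inter> comp_of E A y) y"
    by (auto simp: comp_of_def)
qed

lemma comps_subset_union:
  assumes "Y \<subseteq> A"
  shows "comps E Y = (\<Union>C\<in>comps E A. comps E (Y \<inter> C))"
proof
  show "comps E Y \<subseteq> (\<Union>C\<in>comps E A. comps E (Y \<inter> C))"
  proof
    fix K assume "K \<in> comps E Y"
    then obtain y where y: "y \<in> Y" "K = comp_of E Y y" by (auto simp: comps_def')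
    then have "comp_of E A y \<in> comps E A" using assms by (auto simp: comps_def')
    moreover have "K \<in> comps E (Y \<inter> comp_of E A y)"
      using y comp_of_restrict[OF assms y(1)] by (auto simp: comps_def')
    ultimately show "K \<in> (\<Union>C\<in>comps E A. comps E (Y \<inter> C))" by blast
  qed
next
  show "(\<Union>C\<in>comps E A. comps E (Y \<inter> C)) \<subseteq> comps E Y"
  proof
    fix K assume "K \<in> (\<Union>C\<in>comps E A. comps E (Y \<inter> C))"
    then obtain C where C: "C \<in> comps E A" "K \<in> comps E (Y \<inter> C)" by blast
    then obtain y where y: "y \<in> Y \<inter> C" "K = comp_of E (Y \<inter> C) y" by (auto simp: comps_def')
    obtain a where a: "a \<in> A" "C = comp_of E A a" using C(1) by (auto simp: comps_def')
    have "comp_of E A y = C" using comp_of_eq a y by auto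
    then have "K = comp_of E Y y" using y comp_of_restrict[OF assms] by auto
    then show "K \<in> comps E Y" using y by (auto simp: comps_def')
  qed
qed

lemma comps_minus:
  assumes K: "K \<in> comps E X"
  shows "comps E (X - K) = comps E X - {K}"
proof -
  have "comps E (X - K) = (\<Union>C\<in>comps E X. comps E ((X - K) \<inter> C))"
    by (rule comps_subset_union) auto
  also have "\<dots> = (\<Union>C\<in>comps E X. if C = K then {} else {C})"
  proof (rule SUP_cong[OF refl])
    fix C assume C: "C \<in> comps E X"
    show "comps E ((X - K) \<inter> C) = (if C = K then {} else {C})"
    proof (cases "C = K")
      case True
      then have "(X - K) \<inter> C = {}" by blast
      then show ?thesis using True by simp
    next
      case False
      then have "(X - K) \<inter> C = C" using comps_disj[OF C K] comps_sub[OF C] by blast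
      then show ?thesis using False comps_connected_self[OF comps_connected[OF C] comps_ne[OF C]] by simp
    qed
  qed
  also have "\<dots> = comps E X - {K}" by auto
  finally show ?thesis .
qed

end

lemma comps_wsum:
  assumes sym: "\<And>x y. E x y \<Longrightarrow> E y x" and fin: "finite A"
  shows "(\<Sum>K\<in>comps E A. wsum w K) = wsum w A"
proof -
  have "wsum w A = sum w (\<Union>(comps E A))" by (simp add: comps_Union wsum_def)
  also have "\<dots> = (\<Sum>K\<in>comps E A. sum w K)"
  proof -
    have "\<forall>K\<in>comps E A. finite K" using comps_sub fin by (meson finite_subset)
    moreover have "\<forall>K\<in>comps E A. \<forall>K'\<in>comps E A. K \<noteq> K' \<longrightarrow> K \<inter> K' = {}"
      using comps_disj[where E=E, OF sym] by blast
    ultimately show ?thesis using sum.Union_disjoint[of "comps E A" w] by (simp add: comp_def)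
  qed
  finally show ?thesis by (simp add: wsum_def)
qed



fun ancs :: "'a stree \<Rightarrow> 'a \<Rightarrow> 'a set" where
  "ancs (Node r ts) x = (if x \<in> svs (Node r ts) then insert r (\<Union>t\<in>set ts. ancs t x) else {})"

lemma svs_finite[simp]: "finite (svs t)"
  by (induction t) auto

lemma ancs_sub: "ancs t x \<subseteq> svs t"
  by (induction t) auto

lemma ancs_finite[simp]: "finite (ancs t x)"
  using ancs_sub svs_finite finite_subset by metis

lemma ancs_notin: "x \<notin> svs t \<Longrightarrow> ancs t x = {}"
  by (cases t) auto

lemma ancs_self: "x \<in> svs t \<Longrightarrow> x \<in> ancs t x"
  by (induction t) auto

lemma ancs_root: "x \<in> svs (Node r ts) \<Longrightarrow> r \<in> ancs (Node r ts) x"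
  by simp

lemma ancs_child: "t \<in> set ts \<Longrightarrow> ancs t x \<subseteq> ancs (Node r ts) x"
proof (cases "x \<in> svs t")
  case True
  assume "t \<in> set ts"
  then show ?thesis using True by auto
next
  case False then show ?thesis by (simp add: ancs_notin)
qed

definition G :: "('a \<Rightarrow> real) \<Rightarrow> 'a stree \<Rightarrow> 'a set \<Rightarrow> real" where
  "G w t X = (\<Sum>x\<in>X \<inter> svs t. w x * real (card (ancs t x \<inter> X)))"

lemma G_local: "G w t X = G w t (X \<inter> svs t)"
proof -
  have "ancs t x \<inter> X = ancs t x \<inter> (X \<inter> svs t)" for x using ancs_sub[of t x] by blast
  then show ?thesis unfolding G_def by (simp add: Int_assoc)
qed

lemma G_nonneg: "(\<And>x. x \<in> X \<inter> svs t \<Longrightarrow> 0 \<le> w x) \<Longrightarrow> 0 \<le> G w t X"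
  unfolding G_def by (intro sum_nonneg) auto

lemma G_super:
  assumes "A \<inter> B = {}" "\<And>x. x \<in> (A \<union> B) \<inter> svs t \<Longrightarrow> 0 \<le> w x"
  shows "G w t A + G w t B \<le> G w t (A \<union> B)"
proof -
  have eq: "(A \<union> B) \<inter> svs t = (A \<inter> svs t) \<union> (B \<inter> svs t)" by blast
  have "G w t (A \<union> B) = (\<Sum>x\<in>A \<inter> svs t. w x * real (card (ancs t x \<inter> (A \<union> B))))
      + (\<Sum>x\<in>B \<inter> svs t. w x * real (card (ancs t x \<inter> (A \<union> B))))"
    unfolding G_def eq by (rule sum.union_disjoint) (use assms(1) in auto)
  moreover have "(\<Sum>x\<in>A \<inter> svs t. w x * real (card (ancs t x \<inter> A))) \<le>
     (\<Sum>x\<in>A \<inter> svs t. w x * real (card (ancs t x \<inter> (A \<union> B))))"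
    by (intro sum_mono mult_left_mono) (auto intro: card_mono assms(2))
  moreover have "(\<Sum>x\<in>B \<inter> svs t. w x * real (card (ancs t x \<inter> B))) \<le>
     (\<Sum>x\<in>B \<inter> svs t. w x * real (card (ancs t x \<inter> (A \<union> B))))"
    by (intro sum_mono mult_left_mono) (auto intro: card_mono assms(2))
  ultimately show ?thesis unfolding G_def by linarith
qed

lemma sum_list_concat': "sum_list (concat xss) = sum_list (map sum_list xss)"
  by (induct xss) auto

lemma sum_list_Suc_aux: "sum_list (map (\<lambda>(x, d). w x * real (Suc d)) ds) =
   sum_list (map (\<lambda>(x, d). w x * real d) ds) + sum_list (map (\<lambda>(x, d). w x) ds)"
  by (induct ds) (auto simp: algebra_simps)

lemma sum_list_Suc_aux2: "sum_list (map (\<lambda>(x, d). w x) (map (\<lambda>(x, d). (x, Suc d)) ds)) =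
   sum_list (map (\<lambda>(x, d). w x) ds)"
  by (induct ds) auto

lemma sum_list_Suc_aux3: "sum_list (map (\<lambda>(x, d). w x * real d) (map (\<lambda>(x, d). (x, Suc d)) ds)) =
   sum_list (map (\<lambda>(x, d). w x * real (Suc d)) ds)"
  by (induct ds) auto

definition W :: "('a \<Rightarrow> real) \<Rightarrow> 'a stree \<Rightarrow> real" where
  "W w t = sum_list (map (\<lambda>(x, d). w x) (depths t))"

lemma cost_node: "cost w (Node r ts) = w r + (\<Sum>t\<leftarrow>ts. cost w t + W w t)"
proof -
  have "cost w (Node r ts) = w r + (\<Sum>t\<leftarrow>ts. sum_list (map (\<lambda>(x, d). w x * real d) (map (\<lambda>(x, d). (x, Suc d)) (depths t))))"
    unfolding cost_def by (simp add: map_concat sum_list_concat' o_def)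
  also have "\<dots> = w r + (\<Sum>t\<leftarrow>ts. cost w t + W w t)"
    unfolding sum_list_Suc_aux3 sum_list_Suc_aux cost_def W_def by simp
  finally show ?thesis .
qed

lemma W_node: "W w (Node r ts) = w r + (\<Sum>t\<leftarrow>ts. W w t)"
proof -
  have "W w (Node r ts) = w r + (\<Sum>t\<leftarrow>ts. sum_list (map (\<lambda>(x, d). w x) (map (\<lambda>(x, d). (x, Suc d)) (depths t))))"
    unfolding W_def by (simp add: map_concat sum_list_concat' o_def)
  also have "\<dots> = w r + (\<Sum>t\<leftarrow>ts. W w t)"
    unfolding sum_list_Suc_aux2 W_def by simp
  finally show ?thesis .
qed


lemma G_rec:
  assumes r: "r \<notin> (\<Union>t\<in>set ts. svs t)"
    and disj: "\<forall>t\<in>set ts. \<forall>t'\<in>set ts. t \<noteq> t' \<longrightarrow> svs t \<inter> svs t' = {}"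
  shows "G w (Node r ts) X = (if r \<in> X then wsum w (X \<inter> svs (Node r ts)) else 0) + (\<Sum>t\<in>set ts. G w t X)"
proof -
  let ?S = "svs (Node r ts)"
  have card_eq: "card (ancs (Node r ts) x \<inter> X) = (if r \<in> X then 1 else 0) + (\<Sum>t\<in>set ts. card (ancs t x \<inter> X))"
    if x: "x \<in> ?S" for x
  proof -
    let ?U = "\<Union>t\<in>set ts. ancs t x \<inter> X"
    have a0: "ancs (Node r ts) x = insert r (\<Union>t\<in>set ts. ancs t x)"
      by (subst ancs.simps) (simp only: x if_True)
    have a: "ancs (Node r ts) x \<inter> X = (if r \<in> X then insert r ?U else ?U)"
      unfolding a0 Int_insert_left by auto
    have rU: "r \<notin> ?U" using r ancs_sub[of _ x] by blast
    have finU: "finite ?U" by auto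
    have cU: "card ?U = (\<Sum>t\<in>set ts. card (ancs t x \<inter> X))"
    proof (rule card_UN_disjoint)
      show "\<forall>i\<in>set ts. \<forall>j\<in>set ts. i \<noteq> j \<longrightarrow> ancs i x \<inter> X \<inter> (ancs j x \<inter> X) = {}"
        using disj ancs_sub[of _ x] by blast
    qed auto
    show ?thesis
    proof (cases "r \<in> X")
      case True
      have "card (insert r ?U) = Suc (card ?U)" by (rule card_insert_disjoint[OF finU rU])
      then show ?thesis using True cU unfolding a by simp
    next
      case False then show ?thesis using cU unfolding a by simp
    qed
  qed
  have "G w (Node r ts) X = (\<Sum>x\<in>X \<inter> ?S. (if r \<in> X then w x else 0) + (\<Sum>t\<in>set ts. w x * real (card (ancs t x \<inter> X))))"
    unfolding G_def
  proof (rule sum.cong[OF refl])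
    fix x assume "x \<in> X \<inter> ?S"
    then have xS: "x \<in> ?S" by blast
    show "w x * real (card (ancs (Node r ts) x \<inter> X)) = (if r \<in> X then w x else 0) + (\<Sum>t\<in>set ts. w x * real (card (ancs t x \<inter> X)))"
      by (simp only: card_eq[OF xS]) (simp add: distrib_left sum_distrib_left)
  qed
  also have "\<dots> = (\<Sum>x\<in>X \<inter> ?S. (if r \<in> X then w x else 0)) + (\<Sum>t\<in>set ts. \<Sum>x\<in>X \<inter> ?S. w x * real (card (ancs t x \<inter> X)))"
    by (simp only: sum.distrib sum.swap[of _ "X \<inter> ?S" "set ts"])
  also have "(\<Sum>x\<in>X \<inter> ?S. (if r \<in> X then w x else 0)) = (if r \<in> X then wsum w (X \<inter> ?S) else 0)"
    by (simp add: wsum_def)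
  also have "(\<Sum>t\<in>set ts. \<Sum>x\<in>X \<inter> ?S. w x * real (card (ancs t x \<inter> X))) = (\<Sum>t\<in>set ts. G w t X)"
  proof (rule sum.cong[OF refl])
    fix t assume t: "t \<in> set ts"
    show "(\<Sum>x\<in>X \<inter> ?S. w x * real (card (ancs t x \<inter> X))) = G w t X"
      unfolding G_def
      by (rule sum.mono_neutral_right) (use t in \<open>auto simp: ancs_notin\<close>)
  qed
  finally show ?thesis .
qed



lemma st_node: "is_search_tree E S (Node r ts) \<Longrightarrow> r \<in> S \<and> distinct (map svs ts) \<and>
   set (map svs ts) = comps E (S - {r}) \<and> (\<forall>t\<in>set ts. is_search_tree E (svs t) t)"
  by (erule is_search_tree.cases) auto

lemma st_svs: "is_search_tree E S T \<Longrightarrow> svs T = S"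
proof (induction rule: is_search_tree.induct)
  case (1 r S ts E)
  have "svs (Node r ts) = insert r (\<Union>(set (map svs ts)))" by simp
  also have "\<dots> = S" using 1(1,3) comps_Union[of E "S - {r}"] by auto
  finally show ?case .
qed

lemma st_finite: "is_search_tree E S T \<Longrightarrow> finite S"
  using st_svs svs_finite by metis

lemma st_child_sub: "is_search_tree E S (Node r ts) \<Longrightarrow> t \<in> set ts \<Longrightarrow> svs t \<subseteq> S - {r}"
proof -
  assume st: "is_search_tree E S (Node r ts)" and t: "t \<in> set ts"
  then have "svs t \<in> comps E (S - {r})" using st_node[OF st] by auto
  then show ?thesis by (rule comps_sub)
qed

lemma st_root_notin: "is_search_tree E S (Node r ts) \<Longrightarrow> r \<notin> (\<Union>t\<in>set ts. svs t)"
proof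
  assume st: "is_search_tree E S (Node r ts)" and "r \<in> (\<Union>t\<in>set ts. svs t)"
  then obtain t where "t \<in> set ts" "r \<in> svs t" by blast
  then show False using st_child_sub[OF st] by blast
qed

lemma st_distinct: "is_search_tree E S (Node r ts) \<Longrightarrow> distinct ts"
  by (drule st_node) (simp add: distinct_map)

lemma st_inj: "is_search_tree E S (Node r ts) \<Longrightarrow> inj_on svs (set ts)"
  by (drule st_node) (simp add: distinct_map)

lemma st_build:
  assumes r: "r \<in> S" and fin: "finite S" and f: "\<forall>K\<in>comps E (S - {r}). is_search_tree E K (f K)"
  shows "\<exists>Ks. distinct Ks \<and> set Ks = comps E (S - {r}) \<and> is_search_tree E S (Node r (map f Ks))"
proof -
  obtain Ks where Ks: "set Ks = comps E (S - {r})" "distinct Ks"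
    using finite_distinct_list[OF comps_finite[of "S - {r}" E]] fin by auto
  have "map svs (map f Ks) = map (svs \<circ> f) Ks" by simp
  also have "\<dots> = Ks"
  proof (rule map_idI)
    fix K assume "K \<in> set Ks"
    then have "is_search_tree E K (f K)" using Ks f by auto
    then show "(svs \<circ> f) K = K" using st_svs by simp
  qed
  finally have m: "map svs (map f Ks) = Ks" .
  have ch: "\<forall>t\<in>set (map f Ks). is_search_tree E (svs t) t"
  proof
    fix t assume "t \<in> set (map f Ks)"
    then obtain K where K: "K \<in> set Ks" "t = f K" by auto
    then have "is_search_tree E K (f K)" using Ks f by auto
    then show "is_search_tree E (svs t) t" using K st_svs by metis
  qed
  have "is_search_tree E S (Node r (map f Ks))"
    by (rule is_search_tree.intros) (use r m Ks ch in auto)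
  then show ?thesis using Ks by blast
qed

lemma st_exists: "finite S \<Longrightarrow> S \<noteq> {} \<Longrightarrow> \<exists>T. is_search_tree E S T"
proof (induction "card S" arbitrary: S rule: less_induct)
  case less
  obtain r where r: "r \<in> S" using less.prems by blast
  have "\<forall>K\<in>comps E (S - {r}). \<exists>T. is_search_tree E K T"
  proof
    fix K assume K: "K \<in> comps E (S - {r})"
    have sub: "K \<subseteq> S - {r}" using comps_sub[OF K] .
    then have "K \<subset> S" using r by blast
    then have c: "card K < card S" by (rule psubset_card_mono[OF less.prems(1)])
    have "finite K" using sub less.prems(1) by (meson finite_subset Diff_subset order_trans)
    then show "\<exists>T. is_search_tree E K T" using less.hyps[OF c _ comps_ne[OF K]] by simp
  qed
  then obtain f where "\<forall>K\<in>comps E (S - {r}). is_search_tree E K (f K)" by metis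
  then show ?case using st_build[OF r less.prems(1)] by blast
qed


context
  fixes E :: "'a \<Rightarrow> 'a \<Rightarrow> bool"
  assumes symE: "\<And>x y. E x y \<Longrightarrow> E y x"
begin

lemma st_child_disj: "is_search_tree E S (Node r ts) \<Longrightarrow>
    \<forall>t\<in>set ts. \<forall>t'\<in>set ts. t \<noteq> t' \<longrightarrow> svs t \<inter> svs t' = {}"
proof (intro ballI impI)
  fix t t' assume st: "is_search_tree E S (Node r ts)" and t: "t \<in> set ts" "t' \<in> set ts" "t \<noteq> t'"
  have "svs t \<noteq> svs t'" using st_inj[OF st] t inj_on_def by metis
  moreover have "svs t \<in> comps E (S - {r})" "svs t' \<in> comps E (S - {r})"
    using st_node[OF st] t by auto
  ultimately show "svs t \<inter> svs t' = {}" using comps_disj[where E=E, OF symE] by blast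
qed

lemma st_child_wsum:
  assumes st: "is_search_tree E S (Node r ts)"
  shows "w r + (\<Sum>t\<in>set ts. wsum w (svs t)) = wsum w S"
proof -
  have fin: "finite S" using st_finite[OF st] .
  have "(\<Sum>t\<in>set ts. wsum w (svs t)) = (\<Sum>K\<in>svs ` set ts. wsum w K)"
    by (simp only: sum.reindex[OF st_inj[OF st]] o_def)
  also have "svs ` set ts = comps E (S - {r})" using st_node[OF st] by simp
  also have "(\<Sum>K\<in>comps E (S - {r}). wsum w K) = wsum w (S - {r})"
    by (rule comps_wsum[where E=E, OF symE finite_Diff[OF fin]])
  finally have eq: "(\<Sum>t\<in>set ts. wsum w (svs t)) = wsum w (S - {r})" .
  have r: "r \<in> S" using st_node[OF st] by blast
  show ?thesis using sum.remove[OF fin r, of w] eq unfolding wsum_def by linarith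
qed

end

lemma sym_meta: assumes "\<forall>x y. E x y \<longrightarrow> E y x" shows "E x y \<Longrightarrow> E y x"
  using assms by blast

lemma W_st: "is_search_tree E S T \<Longrightarrow> (\<forall>x y. E x y \<longrightarrow> E y x) \<Longrightarrow> W w T = wsum w S"
proof (induction rule: is_search_tree.induct)
  case (1 r S ts E)
  note sym = sym_meta[OF 1(5)]
  have st: "is_search_tree E S (Node r ts)"
    by (rule is_search_tree.intros) (use 1(1-4) in auto)
  have "W w (Node r ts) = w r + (\<Sum>t\<leftarrow>ts. W w t)" by (rule W_node)
  also have "(\<Sum>t\<leftarrow>ts. W w t) = (\<Sum>t\<in>set ts. W w t)"
    by (rule sum_list_distinct_conv_sum_set[OF st_distinct[OF st]])
  also have "\<dots> = (\<Sum>t\<in>set ts. wsum w (svs t))"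
    by (rule sum.cong) (use 1(4,5) in auto)
  also have "w r + \<dots> = wsum w S" by (rule st_child_wsum[where E=E, OF sym st])
  finally show ?case .
qed

lemma cost_G: "is_search_tree E S T \<Longrightarrow> (\<forall>x y. E x y \<longrightarrow> E y x) \<Longrightarrow> cost w T = G w T S"
proof (induction rule: is_search_tree.induct)
  case (1 r S ts E)
  note sym = sym_meta[OF 1(5)]
  have st: "is_search_tree E S (Node r ts)"
    by (rule is_search_tree.intros) (use 1(1-4) in auto)
  have svsT: "svs (Node r ts) = S" by (rule st_svs[OF st])
  have "cost w (Node r ts) = w r + (\<Sum>t\<leftarrow>ts. cost w t + W w t)" by (rule cost_node)
  also have "(\<Sum>t\<leftarrow>ts. cost w t + W w t) = (\<Sum>t\<in>set ts. cost w t + W w t)"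
    by (rule sum_list_distinct_conv_sum_set[OF st_distinct[OF st]])
  also have "\<dots> = (\<Sum>t\<in>set ts. G w t S + wsum w (svs t))"
  proof (rule sum.cong[OF refl])
    fix t assume t: "t \<in> set ts"
    have stt: "is_search_tree E (svs t) t" using 1(4) t by auto
    have "cost w t = G w t (svs t)" using 1(4,5) t by auto
    also have "\<dots> = G w t S"
    proof -
      have "S \<inter> svs t = svs t" using st_child_sub[OF st t] by blast
      then show ?thesis using G_local[of w t S] by simp
    qed
    finally show "cost w t + W w t = G w t S + wsum w (svs t)"
      using W_st[OF stt 1(5)] by simp
  qed
  also have "\<dots> = (\<Sum>t\<in>set ts. G w t S) + (\<Sum>t\<in>set ts. wsum w (svs t))"
    by (rule sum.distrib)
  finally have "cost w (Node r ts) = wsum w S + (\<Sum>t\<in>set ts. G w t S)"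
    using st_child_wsum[where E=E, OF sym st, of w] by linarith
  moreover have "G w (Node r ts) S = wsum w S + (\<Sum>t\<in>set ts. G w t S)"
    using G_rec[OF st_root_notin[OF st] st_child_disj[where E=E, OF sym st], of w S] 1(1)
    unfolding svsT by simp
  ultimately show ?case by simp
qed



lemma OPT_le:
  assumes st: "is_search_tree E S T" and sym: "\<forall>x y. E x y \<longrightarrow> E y x" and nn: "\<forall>x\<in>S. 0 \<le> w x"
  shows "OPT E S w \<le> cost w T"
  unfolding OPT_def
proof (rule cInf_lower)
  show "cost w T \<in> {cost w T |T. is_search_tree E S T}" using st by blast
  show "bdd_below {cost w T |T. is_search_tree E S T}"
  proof (rule bdd_belowI)
    fix c assume "c \<in> {cost w T |T. is_search_tree E S T}"
    then obtain T' where T': "is_search_tree E S T'" "c = cost w T'" by blast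
    have "c = G w T' S" using cost_G[OF T'(1) sym] T'(2) by simp
    also have "0 \<le> G w T' S" by (rule G_nonneg) (use nn in auto)
    finally show "0 \<le> c" by simp
  qed
qed

lemma OPT_rec:
  assumes sym: "\<forall>x y. E x y \<longrightarrow> E y x" and fin: "finite K" and r: "r \<in> K"
    and nn: "\<forall>x\<in>K. 0 \<le> w x"
  shows "OPT E K w \<le> wsum w K + (\<Sum>K'\<in>comps E (K - {r}). OPT E K' w)"
proof (rule field_le_epsilon)
  fix e :: real assume e: "0 < e"
  define CC where "CC = comps E (K - {r})"
  have finCC: "finite CC" unfolding CC_def by (rule comps_finite) (use fin in simp)
  define d where "d = e / (real (card CC) + 1)"
  have d: "0 < d" unfolding d_def using e by simp
  have "\<forall>K'\<in>CC. \<exists>T. is_search_tree E K' T \<and> cost w T < OPT E K' w + d"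
  proof
    fix K' assume K': "K' \<in> CC"
    have sub: "K' \<subseteq> K" using comps_sub[of K' E "K - {r}"] K' unfolding CC_def by blast
    have fK': "finite K'" using sub fin by (rule finite_subset)
    obtain T0 where "is_search_tree E K' T0"
      using st_exists[OF fK' comps_ne[of K' E "K - {r}"]] K' unfolding CC_def by blast
    then have ne: "{cost w T |T. is_search_tree E K' T} \<noteq> {}" by blast
    have "Inf {cost w T |T. is_search_tree E K' T} < OPT E K' w + d" using d by (simp add: OPT_def)
    then obtain c where "c \<in> {cost w T |T. is_search_tree E K' T}" "c < OPT E K' w + d"
      using cInf_lessD[OF ne] by blast
    then show "\<exists>T. is_search_tree E K' T \<and> cost w T < OPT E K' w + d" by blast
  qed
  then obtain f where f: "\<forall>K'\<in>CC. is_search_tree E K' (f K') \<and> cost w (f K') < OPT E K' w + d"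
    by metis
  obtain Ks where Ks: "distinct Ks" "set Ks = CC" "is_search_tree E K (Node r (map f Ks))"
    using st_build[OF r fin, of E f] f unfolding CC_def by blast
  have "OPT E K w \<le> cost w (Node r (map f Ks))" by (rule OPT_le[OF Ks(3) sym nn])
  also have "cost w (Node r (map f Ks)) = w r + (\<Sum>t\<leftarrow>map f Ks. cost w t + W w t)"
    by (rule cost_node)
  also have "(\<Sum>t\<leftarrow>map f Ks. cost w t + W w t) = (\<Sum>K'\<leftarrow>Ks. cost w (f K') + W w (f K'))"
    by (simp add: o_def)
  also have "\<dots> = (\<Sum>K'\<in>CC. cost w (f K') + W w (f K'))"
    using sum_list_distinct_conv_sum_set[OF Ks(1)] Ks(2) by simp
  also have "\<dots> = (\<Sum>K'\<in>CC. cost w (f K')) + (\<Sum>K'\<in>CC. wsum w K')"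
  proof -
    have "(\<Sum>K'\<in>CC. cost w (f K') + W w (f K')) = (\<Sum>K'\<in>CC. cost w (f K') + wsum w K')"
    proof (rule sum.cong[OF refl])
      fix K' assume "K' \<in> CC"
      then have "is_search_tree E K' (f K')" using f by blast
      then show "cost w (f K') + W w (f K') = cost w (f K') + wsum w K'"
        using W_st[of E K' "f K'" w] sym by simp
    qed
    then show ?thesis by (simp add: sum.distrib)
  qed
  also have "(\<Sum>K'\<in>CC. wsum w K') = wsum w (K - {r})"
    unfolding CC_def by (rule comps_wsum[OF sym_meta[OF sym] finite_Diff[OF fin]])
  also have "(\<Sum>K'\<in>CC. cost w (f K')) \<le> (\<Sum>K'\<in>CC. OPT E K' w + d)"
    by (rule sum_mono) (use f in \<open>auto intro: less_imp_le\<close>)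
  also have "(\<Sum>K'\<in>CC. OPT E K' w + d) = (\<Sum>K'\<in>CC. OPT E K' w) + real (card CC) * d"
    by (simp add: sum.distrib)
  finally have 1: "OPT E K w \<le> w r + ((\<Sum>K'\<in>CC. OPT E K' w) + real (card CC) * d + wsum w (K - {r}))"
    by simp
  have 2: "real (card CC) * d \<le> e"
  proof -
    have "real (card CC) * d = e * (real (card CC) / (real (card CC) + 1))"
      unfolding d_def by (simp add: field_simps)
    also have "\<dots> \<le> e * 1" using e by (intro mult_left_mono) auto
    finally show ?thesis by simp
  qed
  have 3: "wsum w K = w r + wsum w (K - {r})"
    unfolding wsum_def by (rule sum.remove[OF fin r])
  show "OPT E K w \<le> wsum w K + (\<Sum>K'\<in>comps E (K - {r}). OPT E K' w) + e"
    using 1 2 3 unfolding CC_def by linarith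
qed



lemma G_lower:
  "is_search_tree E S T \<Longrightarrow> (\<forall>x y. E x y \<longrightarrow> E y x) \<Longrightarrow> (\<forall>x\<in>S. 0 \<le> w x) \<Longrightarrow> X \<subseteq> S \<Longrightarrow>
    (\<Sum>K\<in>comps E X. OPT E K w) \<le> G w T X"
proof (induction arbitrary: X rule: is_search_tree.induct)
  case (1 r S ts E X)
  note sym = sym_meta[OF 1(5)]
  have st: "is_search_tree E S (Node r ts)"
    by (rule is_search_tree.intros) (use 1(1-4) in auto)
  have svsT: "svs (Node r ts) = S" by (rule st_svs[OF st])
  have disj: "\<forall>t\<in>set ts. \<forall>t'\<in>set ts. t \<noteq> t' \<longrightarrow> svs t \<inter> svs t' = {}"
    by (rule st_child_disj[where E=E, OF sym st])
  have rnot: "r \<notin> (\<Union>t\<in>set ts. svs t)" by (rule st_root_notin[OF st])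
  have IH: "(\<Sum>K\<in>comps E Y. OPT E K w) \<le> G w t Y" if t: "t \<in> set ts" and Y: "Y \<subseteq> svs t" for t Y
  proof -
    have "svs t \<subseteq> S" using st_child_sub[OF st t] by blast
    then show ?thesis using 1(4) t Y 1(5,6) by blast
  qed
  have forest: "(\<Sum>K\<in>comps E Y. OPT E K w) \<le> (\<Sum>t\<in>set ts. G w t Y)" if Y: "Y \<subseteq> S - {r}" for Y
  proof -
    have cS: "comps E (S - {r}) = svs ` set ts" using 1(3) by simp
    have cY: "comps E Y = (\<Union>t\<in>set ts. comps E (Y \<inter> svs t))"
      using comps_subset_union[where E=E, OF sym Y] unfolding cS by simp
    have "(\<Sum>K\<in>comps E Y. OPT E K w) = (\<Sum>t\<in>set ts. \<Sum>K\<in>comps E (Y \<inter> svs t). OPT E K w)"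
      unfolding cY
    proof (rule sum.UNION_disjoint)
      show "\<forall>t\<in>set ts. finite (comps E (Y \<inter> svs t))"
        by (intro ballI comps_finite) simp
      show "\<forall>t\<in>set ts. \<forall>t'\<in>set ts. t \<noteq> t' \<longrightarrow> comps E (Y \<inter> svs t) \<inter> comps E (Y \<inter> svs t') = {}"
      proof (intro ballI impI)
        fix t t' assume tt: "t \<in> set ts" "t' \<in> set ts" "t \<noteq> t'"
        show "comps E (Y \<inter> svs t) \<inter> comps E (Y \<inter> svs t') = {}"
        proof (rule ccontr)
          assume "comps E (Y \<inter> svs t) \<inter> comps E (Y \<inter> svs t') \<noteq> {}"
          then obtain K where K: "K \<in> comps E (Y \<inter> svs t)" "K \<in> comps E (Y \<inter> svs t')" by blast
          have "K \<subseteq> svs t \<inter> svs t'" using comps_sub[OF K(1)] comps_sub[OF K(2)] by blast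
          then show False using disj tt comps_ne[OF K(1)] by blast
        qed
      qed
    qed simp
    also have "\<dots> \<le> (\<Sum>t\<in>set ts. G w t (Y \<inter> svs t))"
      by (rule sum_mono) (rule IH, auto)
    also have "\<dots> = (\<Sum>t\<in>set ts. G w t Y)"
      by (rule sum.cong[OF refl]) (rule G_local[symmetric])
    finally show ?thesis .
  qed
  have grec: "G w (Node r ts) X = (if r \<in> X then wsum w (X \<inter> S) else 0) + (\<Sum>t\<in>set ts. G w t X)"
    using G_rec[OF rnot disj, of w X] unfolding svsT .
  show ?case
  proof (cases "r \<in> X")
    case False
    then have "X \<subseteq> S - {r}" using 1(7) by blast
    then show ?thesis using forest grec False by simp
  next
    case True
    define K where "K = comp_of E X r"
    have Kc: "K \<in> comps E X" unfolding K_def comps_def' using True by blast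
    have KX: "K \<subseteq> X" unfolding K_def by (rule comp_of_sub[OF True])
    have rK: "r \<in> K" unfolding K_def by simp
    have finX: "finite X" using 1(7) st_finite[OF st] finite_subset by blast
    have finK: "finite K" using KX finX finite_subset by blast
    have nnX: "\<forall>x\<in>X. 0 \<le> w x" using 1(6,7) by blast
    have "(\<Sum>K'\<in>comps E X. OPT E K' w) = OPT E K w + (\<Sum>K'\<in>comps E X - {K}. OPT E K' w)"
      by (rule sum.remove[OF comps_finite[OF finX] Kc])
    also have "comps E X - {K} = comps E (X - K)"
      by (rule comps_minus[where E=E, OF sym Kc, symmetric])
    finally have s1: "(\<Sum>K'\<in>comps E X. OPT E K' w) = OPT E K w + (\<Sum>K'\<in>comps E (X - K). OPT E K' w)" .
    have s2: "OPT E K w \<le> wsum w K + (\<Sum>K'\<in>comps E (K - {r}). OPT E K' w)"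
      by (rule OPT_rec[OF 1(5) finK rK]) (use nnX KX in blast)
    have s3: "(\<Sum>K'\<in>comps E (K - {r}). OPT E K' w) \<le> (\<Sum>t\<in>set ts. G w t (K - {r}))"
      by (rule forest) (use KX 1(7) in blast)
    have s4: "(\<Sum>K'\<in>comps E (X - K). OPT E K' w) \<le> (\<Sum>t\<in>set ts. G w t (X - K))"
      by (rule forest) (use rK 1(7) in blast)
    have s5: "(\<Sum>t\<in>set ts. G w t (K - {r})) + (\<Sum>t\<in>set ts. G w t (X - K)) \<le> (\<Sum>t\<in>set ts. G w t X)"
    proof -
      have "(\<Sum>t\<in>set ts. G w t (K - {r})) + (\<Sum>t\<in>set ts. G w t (X - K)) =
          (\<Sum>t\<in>set ts. G w t (K - {r}) + G w t (X - K))" by (simp add: sum.distrib)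
      also have "\<dots> \<le> (\<Sum>t\<in>set ts. G w t X)"
      proof (rule sum_mono)
        fix t assume t: "t \<in> set ts"
        have "G w t (K - {r}) + G w t (X - K) \<le> G w t ((K - {r}) \<union> (X - K))"
          by (rule G_super) (use nnX KX in auto)
        also have "(K - {r}) \<union> (X - K) = X - {r}" using KX rK by blast
        also have "G w t (X - {r}) = G w t X"
        proof -
          have "(X - {r}) \<inter> svs t = X \<inter> svs t" using rnot t by blast
          then show ?thesis using G_local[of w t "X - {r}"] G_local[of w t X] by simp
        qed
        finally show "G w t (K - {r}) + G w t (X - K) \<le> G w t X" .
      qed
      finally show ?thesis .
    qed
    have s6: "wsum w K \<le> wsum w (X \<inter> S)"
    proof -
      have "X \<inter> S = X" using 1(7) by blast
      then show ?thesis unfolding wsum_def using sum_mono2[OF finX KX, of w] nnX by auto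
    qed
    show ?thesis using s1 s2 s3 s4 s5 s6 grec True by simp
  qed
qed

lemma G_conn:
  assumes "is_search_tree E S T" "\<forall>x y. E x y \<longrightarrow> E y x" "\<forall>x\<in>S. 0 \<le> w x" "H \<subseteq> S"
    "connected_in E H" "H \<noteq> {}"
  shows "OPT E H w \<le> G w T H"
  using G_lower[OF assms(1-4)] comps_connected_self[OF sym_meta[OF assms(2)] assms(5,6)] by simp



lemma comp_adj:
  assumes sym: "\<And>x y. E x y \<Longrightarrow> E y x" and con: "connected_in E V" and c: "c \<in> V"
    and H: "H \<in> comps E (V - {c})"
  shows "\<exists>h\<in>H. E h c"
proof -
  obtain x where x: "x \<in> H" using comps_ne[OF H] by blast
  have xV: "x \<in> V" using comps_sub[OF H] x by blast
  have reach: "reach_in E V x c" using con xV c unfolding connected_in_def by blast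
  have gen: "y \<notin> H \<longrightarrow> (\<exists>h\<in>H. \<exists>v\<in>V - H. E h v)" if "reach_in E V x y" for y
    using that
  proof (induction rule: reach_induct)
    case base then show ?case using x by blast
  next
    case (step y z)
    show ?case
    proof (cases "y \<in> H")
      case True
      then show ?thesis using step by blast
    next
      case False
      then show ?thesis using step by blast
    qed
  qed
  have cH: "c \<notin> H" using comps_sub[OF H] by blast
  obtain h v where hv: "h \<in> H" "v \<in> V - H" "E h v" using gen[OF reach] cH by blast
  have "v = c"
  proof (rule ccontr)
    assume "v \<noteq> c"
    then have "v \<in> H" using comps_closed[OF H hv(1)] hv by blast
    then show False using hv by blast
  qed
  then show ?thesis using hv by blast
qed

lemma conn_star:
  assumes sym: "\<And>x y. E x y \<Longrightarrow> E y x" and con: "connected_in E V" and c: "c \<in> V"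
    and Q: "Q \<subseteq> comps E (V - {c})"
  shows "connected_in E (insert c (\<Union>Q))"
proof -
  let ?Z = "insert c (\<Union>Q)"
  have toc: "reach_in E ?Z z c" if z: "z \<in> ?Z" for z
  proof (cases "z = c")
    case True then show ?thesis by simp
  next
    case False
    then obtain H where H: "H \<in> Q" "z \<in> H" using z by blast
    have HP: "H \<in> comps E (V - {c})" using H Q by blast
    obtain h where h: "h \<in> H" "E h c" using comp_adj[OF sym con c HP] by blast
    have "connected_in E H" by (rule comps_connected[OF sym HP])
    then have "reach_in E H z h" using H(2) h(1) unfolding connected_in_def by blast
    moreover have HZ: "H \<subseteq> ?Z" using H(1) by blast
    ultimately have "reach_in E ?Z z h" using reach_mono by metis
    moreover have "h \<in> ?Z" using HZ h(1) by blast
    moreover have "c \<in> ?Z" by simp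
    ultimately show ?thesis using reach_step h(2) by metis
  qed
  show ?thesis unfolding connected_in_def
  proof (intro ballI)
    fix y z assume "y \<in> ?Z" "z \<in> ?Z"
    then have "reach_in E ?Z y c" "reach_in E ?Z c z" using toc reach_sym[where E=E, OF sym, where S="?Z" and x=z and y=c] by simp_all
    then show "reach_in E ?Z y z" by (rule reach_trans)
  qed
qed



lemma two_le_card: "finite A \<Longrightarrow> a \<in> A \<Longrightarrow> b \<in> A \<Longrightarrow> a \<noteq> b \<Longrightarrow> 2 \<le> card A"
proof -
  assume h: "finite A" "a \<in> A" "b \<in> A" "a \<noteq> b"
  have "card {a, b} \<le> card A" by (rule card_mono) (use h in auto)
  then show ?thesis using h(4) by simp
qed

lemma three_le_card: "finite A \<Longrightarrow> a \<in> A \<Longrightarrow> b \<in> A \<Longrightarrow> d \<in> A \<Longrightarrow> a \<noteq> b \<Longrightarrow> a \<noteq> d \<Longrightarrow> b \<noteq> d \<Longrightarrow> 3 \<le> card A"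
proof -
  assume h: "finite A" "a \<in> A" "b \<in> A" "d \<in> A" "a \<noteq> b" "a \<noteq> d" "b \<noteq> d"
  have "card {a, b, d} \<le> card A" by (rule card_mono) (use h in auto)
  then show ?thesis using h(5-7) by simp
qed

theorem mainTheorem12:
  fixes E :: "'a \<Rightarrow> 'a \<Rightarrow> bool" and V :: "'a set" and w :: "'a \<Rightarrow> real"
    and \<alpha> :: real and c :: 'a
  assumes sym: "\<And>x y. E x y \<Longrightarrow> E y x"
    and irrefl: "\<And>x. \<not> E x x"
    and tree: "is_tree E V"
    and nonneg: "\<And>x. x \<in> V \<Longrightarrow> w x \<ge> 0"
    and alpha: "1/3 \<le> \<alpha>" "\<alpha> \<le> 1/2"
    and centroid: "is_centroid \<alpha> E V w c"
  shows "OPT E V w \<ge> (2 - 3 * \<alpha>) * wsum w V + (3 * \<alpha> - 1) * w c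
           + (\<Sum>H \<in> comps E (V - {c}). OPT E H w)"
proof -
  have symO: "\<forall>x y. E x y \<longrightarrow> E y x" using sym by blast
  have finV: "finite V" and Vne: "V \<noteq> {}" and conV: "connected_in E V"
    using tree unfolding is_tree_def by auto
  have cV: "c \<in> V" using centroid unfolding is_centroid_def by blast
  define P where "P = comps E (V - {c})"
  define m where "m = wsum w V"
  have cent: "\<And>H. H \<in> P \<Longrightarrow> wsum w H \<le> \<alpha> * m"
    using centroid unfolding is_centroid_def P_def m_def by blast
  have nnV: "\<forall>x\<in>V. 0 \<le> w x" using nonneg by blast
  have finP: "finite P" unfolding P_def by (rule comps_finite) (use finV in simp)
  have Psub: "\<And>H. H \<in> P \<Longrightarrow> H \<subseteq> V - {c}" unfolding P_def by (rule comps_sub)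
  have Pne: "\<And>H. H \<in> P \<Longrightarrow> H \<noteq> {}" unfolding P_def by (rule comps_ne)
  have Pcon: "\<And>H. H \<in> P \<Longrightarrow> connected_in E H" unfolding P_def by (rule comps_connected[OF sym])
  have Pdisj: "\<And>H H'. H \<in> P \<Longrightarrow> H' \<in> P \<Longrightarrow> H \<noteq> H' \<Longrightarrow> H \<inter> H' = {}"
    unfolding P_def by (rule comps_disj[where E=E, OF sym])
  have PU: "\<Union>P = V - {c}" unfolding P_def by (rule comps_Union)
  have wc0: "0 \<le> w c" using nnV cV by blast
  have wH0: "\<And>H. H \<in> P \<Longrightarrow> 0 \<le> wsum w H"
    unfolding wsum_def by (rule sum_nonneg) (use Psub nnV in blast)
  have sumP: "(\<Sum>H\<in>P. wsum w H) = m - w c"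
  proof -
    have "(\<Sum>H\<in>P. wsum w H) = wsum w (V - {c})"
      unfolding P_def by (rule comps_wsum[OF sym finite_Diff[OF finV]])
    moreover have "wsum w V = w c + wsum w (V - {c})"
      unfolding wsum_def by (rule sum.remove[OF finV cV])
    ultimately show ?thesis unfolding m_def by simp
  qed
  have m_wc: "0 \<le> m - w c" using sumP wH0 sum_nonneg by metis
  have key: "(2 - 3 * \<alpha>) * m + (3 * \<alpha> - 1) * w c + (\<Sum>H\<in>P. OPT E H w) \<le> cost w T"
    if st: "is_search_tree E V T" for T
  proof -
    obtain r ts where T: "T = Node r ts" by (cases T)
    have svsT: "svs T = V" by (rule st_svs[OF st])
    have ancV: "\<And>x. ancs T x \<subseteq> V" using ancs_sub svsT by metis
    have ancfin: "\<And>x. finite (ancs T x)" by simp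
    have stN: "is_search_tree E V (Node r ts)" using st T by simp
    have rV: "r \<in> V" using st_node[OF stN] by blast
    have ranc: "\<And>x. x \<in> V \<Longrightarrow> r \<in> ancs T x" using svsT unfolding T by simp
    have selfanc: "\<And>x. x \<in> V \<Longrightarrow> x \<in> ancs T x" using ancs_self svsT by metis
    define ex where "ex = w c * real (card (ancs T c)) + (\<Sum>H\<in>P. \<Sum>x\<in>H. w x * real (card (ancs T x - H)))"
    have decomp: "(\<Sum>H\<in>P. OPT E H w) + ex \<le> cost w T"
    proof -
      define f where "f x = w x * real (card (ancs T x))" for x
      have "cost w T = G w T V" by (rule cost_G[OF st symO])
      also have "\<dots> = (\<Sum>x\<in>V. f x)"
      proof -
        have "V \<inter> svs T = V" using svsT by simp
        moreover have "\<And>x. ancs T x \<inter> V = ancs T x" using ancV by blast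
        ultimately show ?thesis unfolding G_def f_def by simp
      qed
      also have "V = insert c (\<Union>P)" using PU cV by blast
      also have "(\<Sum>x\<in>insert c (\<Union>P). f x) = f c + (\<Sum>x\<in>\<Union>P. f x)"
      proof (rule sum.insert)
        show "finite (\<Union>P)" using PU finV by simp
        show "c \<notin> \<Union>P" using PU by blast
      qed
      also have "(\<Sum>x\<in>\<Union>P. f x) = (\<Sum>H\<in>P. \<Sum>x\<in>H. f x)"
      proof -
        have "\<forall>H\<in>P. finite H" using Psub finV by (meson finite_Diff finite_subset)
        moreover have "\<forall>H\<in>P. \<forall>H'\<in>P. H \<noteq> H' \<longrightarrow> H \<inter> H' = {}" using Pdisj by blast
        ultimately show ?thesis using sum.Union_disjoint[of P f] by (simp add: comp_def)
      qed
      also have "(\<Sum>H\<in>P. \<Sum>x\<in>H. f x) = (\<Sum>H\<in>P. G w T H + (\<Sum>x\<in>H. w x * real (card (ancs T x - H))))"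
      proof (rule sum.cong[OF refl])
        fix H assume H: "H \<in> P"
        have HV: "H \<inter> svs T = H" using Psub[OF H] svsT by blast
        have "(\<Sum>x\<in>H. f x) = (\<Sum>x\<in>H. w x * real (card (ancs T x \<inter> H)) + w x * real (card (ancs T x - H)))"
        proof (rule sum.cong[OF refl])
          fix x assume "x \<in> H"
          have "card (ancs T x) = card (ancs T x \<inter> H) + card (ancs T x - H)"
            by (rule card_Int_Diff) simp
          then show "f x = w x * real (card (ancs T x \<inter> H)) + w x * real (card (ancs T x - H))"
            unfolding f_def by (simp add: distrib_left)
        qed
        also have "\<dots> = G w T H + (\<Sum>x\<in>H. w x * real (card (ancs T x - H)))"
          unfolding G_def HV by (rule sum.distrib)
        finally show "(\<Sum>x\<in>H. f x) = G w T H + (\<Sum>x\<in>H. w x * real (card (ancs T x - H)))" .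
      qed
      also have "\<dots> = (\<Sum>H\<in>P. G w T H) + (\<Sum>H\<in>P. \<Sum>x\<in>H. w x * real (card (ancs T x - H)))"
        by (rule sum.distrib)
      finally have cT: "cost w T = f c + (\<Sum>H\<in>P. G w T H) + (\<Sum>H\<in>P. \<Sum>x\<in>H. w x * real (card (ancs T x - H)))"
        by simp
      have "(\<Sum>H\<in>P. OPT E H w) \<le> (\<Sum>H\<in>P. G w T H)"
      proof (rule sum_mono)
        fix H assume H: "H \<in> P"
        show "OPT E H w \<le> G w T H"
          by (rule G_conn[OF st symO nnV _ Pcon[OF H] Pne[OF H]]) (use Psub[OF H] in blast)
      qed
      then show ?thesis using cT unfolding ex_def f_def by linarith
    qed
    have bound: "w c * kc + (\<Sum>H\<in>P. b H * wsum w H) \<le> ex"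
      if hb: "\<forall>H\<in>P. \<forall>x\<in>H. b H \<le> real (card (ancs T x - H))" and hk: "kc \<le> real (card (ancs T c))"
      for b :: "'a set \<Rightarrow> real" and kc
    proof -
      have "w c * kc \<le> w c * real (card (ancs T c))" by (rule mult_left_mono[OF hk wc0])
      moreover have "(\<Sum>H\<in>P. b H * wsum w H) \<le> (\<Sum>H\<in>P. \<Sum>x\<in>H. w x * real (card (ancs T x - H)))"
      proof (rule sum_mono)
        fix H assume H: "H \<in> P"
        have "b H * wsum w H = (\<Sum>x\<in>H. w x * b H)"
          unfolding wsum_def by (simp add: sum_distrib_left mult.commute)
        also have "\<dots> \<le> (\<Sum>x\<in>H. w x * real (card (ancs T x - H)))"
        proof (rule sum_mono)
          fix x assume x: "x \<in> H"
          have "0 \<le> w x" using x Psub[OF H] nnV by blast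
          then show "w x * b H \<le> w x * real (card (ancs T x - H))"
            using hb H x by (intro mult_left_mono) auto
        qed
        finally show "b H * wsum w H \<le> (\<Sum>x\<in>H. w x * real (card (ancs T x - H)))" .
      qed
      ultimately show ?thesis unfolding ex_def by linarith
    qed
    have m0: "0 \<le> m" using m_wc wc0 by linarith
    have a1: "0 \<le> 3 * \<alpha> - 1" using alpha by linarith
    have lowb: "(2 - 3 * \<alpha>) * m + (3 * \<alpha> - 1) * w c \<le> ex"
    proof (cases "r = c")
      case True
      have "w c * 1 + (\<Sum>H\<in>P. 1 * wsum w H) \<le> ex"
      proof (rule bound)
        show "\<forall>H\<in>P. \<forall>x\<in>H. 1 \<le> real (card (ancs T x - H))"
        proof (intro ballI)
          fix H x assume H: "H \<in> P" and x: "x \<in> H"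
          have "r \<in> ancs T x - H" using ranc[of x] x Psub[OF H] True by blast
          then have "card (ancs T x - H) \<noteq> 0" by auto
          then show "1 \<le> real (card (ancs T x - H))" by linarith
        qed
        have "c \<in> ancs T c" by (rule selfanc[OF cV])
        then have "card (ancs T c) \<noteq> 0" by auto
        then show "1 \<le> real (card (ancs T c))" by linarith
      qed
      then have "m \<le> ex" using sumP by simp
      moreover have "0 \<le> (3 * \<alpha> - 1) * (m - w c)" using a1 m_wc by simp
      ultimately show ?thesis by (simp add: algebra_simps)
    next
      case rc: False
      have rVc: "r \<in> V - {c}" using rV rc by blast
      define H1 where "H1 = comp_of E (V - {c}) r"
      have H1P: "H1 \<in> P" unfolding H1_def P_def comps_def' using rVc by blast
      have rH1: "r \<in> H1" unfolding H1_def by simp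
      have rnotH: "\<And>H. H \<in> P \<Longrightarrow> H \<noteq> H1 \<Longrightarrow> r \<notin> H" using Pdisj[OF _ H1P] rH1 by blast
      define C where "C = comp_of E (V - {r}) c"
      have cVr: "c \<in> V - {r}" using cV rc by blast
      have CC: "C \<in> comps E (V - {r})" unfolding C_def comps_def' using cVr by blast
      have Csub: "C \<subseteq> V - {r}" unfolding C_def by (rule comp_of_sub[OF cVr])
      have cC: "c \<in> C" unfolding C_def by simp
      have sn: "r \<in> V \<and> distinct (map svs ts) \<and> set (map svs ts) = comps E (V - {r}) \<and>
         (\<forall>t\<in>set ts. is_search_tree E (svs t) t)" by (rule st_node[OF stN])
      have "C \<in> svs ` set ts" using sn CC by simp
      then obtain tC where tC: "tC \<in> set ts" "svs tC = C" by (metis imageE)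
      obtain a2 ts2 where tC2: "tC = Node a2 ts2" by (cases tC)
      have stC: "is_search_tree E C (Node a2 ts2)" using sn tC tC2 by auto
      have a2C: "a2 \<in> C" using st_node[OF stC] by blast
      have a2anc: "\<And>x. x \<in> C \<Longrightarrow> a2 \<in> ancs T x"
      proof -
        fix x assume x: "x \<in> C"
        have "a2 \<in> ancs tC x" using x tC(2) unfolding tC2 by simp
        then show "a2 \<in> ancs T x" using ancs_child[OF tC(1), of x r] T by blast
      qed
      have a2r: "a2 \<noteq> r" using a2C Csub by blast
      have VH1C: "V - H1 \<subseteq> C"
      proof -
        define Z where "Z = insert c (\<Union>(P - {H1}))"
        have Zc: "connected_in E Z" unfolding Z_def
          using conn_star[OF sym conV cV, of "P - {H1}"] unfolding P_def by blast
        have "V - H1 \<subseteq> Z"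
        proof
          fix x assume x: "x \<in> V - H1"
          show "x \<in> Z"
          proof (cases "x = c")
            case True then show ?thesis unfolding Z_def by simp
          next
            case False
            then have "x \<in> \<Union>P" using PU x by blast
            then obtain H where "H \<in> P" "x \<in> H" by blast
            then show ?thesis unfolding Z_def using x by blast
          qed
        qed
        moreover have "Z \<subseteq> V - {r}"
        proof
          fix x assume x: "x \<in> Z"
          show "x \<in> V - {r}"
          proof (cases "x = c")
            case True then show ?thesis using cVr by simp
          next
            case False
            then obtain H where H: "H \<in> P" "H \<noteq> H1" "x \<in> H" using x unfolding Z_def by blast
            then show ?thesis using Psub[OF H(1)] rnotH[OF H(1,2)] by blast
          qed
        qed
        then have "Z \<subseteq> C" unfolding C_def by (rule connected_sub_comp[OF Zc]) (simp add: Z_def)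
        ultimately show ?thesis by blast
      qed
      have xC: "\<And>H x. H \<in> P \<Longrightarrow> H \<noteq> H1 \<Longrightarrow> x \<in> H \<Longrightarrow> x \<in> C"
      proof -
        fix H x assume H: "H \<in> P" "H \<noteq> H1" "x \<in> H"
        have "x \<notin> H1" using Pdisj[OF H(1) H1P H(2)] H(3) by blast
        then show "x \<in> C" using VH1C Psub[OF H(1)] H(3) by blast
      qed
      show ?thesis
      proof (cases "a2 = c \<or> a2 \<in> H1")
        case A: True
        have a2notH: "\<And>H. H \<in> P \<Longrightarrow> H \<noteq> H1 \<Longrightarrow> a2 \<notin> H"
          using A Psub Pdisj[OF _ H1P] by blast
        have "w c * 2 + (\<Sum>H\<in>P. (2 - (if H = H1 then 2 else 0)) * wsum w H) \<le> ex"
        proof (rule bound)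
          show "\<forall>H\<in>P. \<forall>x\<in>H. 2 - (if H = H1 then 2 else 0) \<le> real (card (ancs T x - H))"
          proof (intro ballI)
            fix H x assume H: "H \<in> P" and x: "x \<in> H"
            show "2 - (if H = H1 then 2 else 0) \<le> real (card (ancs T x - H))"
            proof (cases "H = H1")
              case True then show ?thesis by simp
            next
              case False
              have xV: "x \<in> V" using x Psub[OF H] by blast
              have "2 \<le> card (ancs T x - H)"
                by (rule two_le_card[of _ r a2]) (use ranc[OF xV] a2anc[OF xC[OF H False x]] rnotH[OF H False] a2notH[OF H False] a2r in auto)
              then show ?thesis using False by simp
            qed
          qed
          have "2 \<le> card (ancs T c)"
            by (rule two_le_card[of _ r c]) (use ranc[OF cV] selfanc[OF cV] rc in auto)
          then show "2 \<le> real (card (ancs T c))" by simp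
        qed
        moreover have "(\<Sum>H\<in>P. (2 - (if H = H1 then 2 else 0)) * wsum w H) = 2 * (m - w c) - 2 * wsum w H1"
        proof -
          have "(\<Sum>H\<in>P. (2 - (if H = H1 then 2 else 0)) * wsum w H) =
                (\<Sum>H\<in>P. 2 * wsum w H - (if H = H1 then 2 * wsum w H else 0))"
            by (rule sum.cong) auto
          also have "\<dots> = 2 * (\<Sum>H\<in>P. wsum w H) - 2 * wsum w H1"
            by (simp add: sum_subtractf sum_distrib_left finP H1P)
          finally show ?thesis using sumP by simp
        qed
        moreover have "wsum w H1 \<le> \<alpha> * m" by (rule cent[OF H1P])
        moreover have "0 \<le> (3 * \<alpha> - 1) * (m - w c)" using a1 m_wc by simp
        moreover have "0 \<le> (1 - 2 * \<alpha>) * m" using alpha m0 by simp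
        ultimately show ?thesis by (simp add: algebra_simps)
      next
        case B: False
        have a2Vc: "a2 \<in> V - {c}" using a2C Csub B by blast
        define H2 where "H2 = comp_of E (V - {c}) a2"
        have H2P: "H2 \<in> P" unfolding H2_def P_def comps_def' using a2Vc by blast
        have a2H2: "a2 \<in> H2" unfolding H2_def by simp
        have H12: "H2 \<noteq> H1" using a2H2 B by blast
        have a2notH: "\<And>H. H \<in> P \<Longrightarrow> H \<noteq> H2 \<Longrightarrow> a2 \<notin> H"
          using Pdisj[OF _ H2P] a2H2 by blast
        define b where "b H = (2::real) - (if H = H1 then 2 else 0) - (if H = H2 then 1 else 0)" for H :: "'a set"
        have "w c * 3 + (\<Sum>H\<in>P. b H * wsum w H) \<le> ex"
        proof (rule bound)
          show "\<forall>H\<in>P. \<forall>x\<in>H. b H \<le> real (card (ancs T x - H))"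
          proof (intro ballI)
            fix H x assume H: "H \<in> P" and x: "x \<in> H"
            have xV: "x \<in> V" using x Psub[OF H] by blast
            show "b H \<le> real (card (ancs T x - H))"
            proof (cases "H = H1")
              case True then show ?thesis using H12 by (simp add: b_def)
            next
              case False
              show ?thesis
              proof (cases "H = H2")
                case True
                have "r \<in> ancs T x - H" using ranc[OF xV] rnotH[OF H False] by blast
                then have "0 < card (ancs T x - H)" by (auto simp: card_gt_0_iff)
                then have "1 \<le> real (card (ancs T x - H))" by linarith
                then show ?thesis using True False H12 by (simp add: b_def)
              next
                case F2: False
                have "2 \<le> card (ancs T x - H)"
                  by (rule two_le_card[of _ r a2]) (use ranc[OF xV] a2anc[OF xC[OF H False x]] rnotH[OF H False] a2notH[OF H F2] a2r in auto)
                then show ?thesis using False F2 by (simp add: b_def)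
              qed
            qed
          qed
          have "3 \<le> card (ancs T c)"
            by (rule three_le_card[of _ r a2 c]) (use ranc[OF cV] a2anc[OF cC] selfanc[OF cV] rc a2r B in auto)
          then show "3 \<le> real (card (ancs T c))" by simp
        qed
        moreover have "(\<Sum>H\<in>P. b H * wsum w H) = 2 * (m - w c) - 2 * wsum w H1 - wsum w H2"
        proof -
          have "(\<Sum>H\<in>P. b H * wsum w H) =
                (\<Sum>H\<in>P. 2 * wsum w H - (if H = H1 then 2 * wsum w H else 0) - (if H = H2 then wsum w H else 0))"
            by (rule sum.cong) (auto simp: b_def algebra_simps)
          also have "\<dots> = 2 * (\<Sum>H\<in>P. wsum w H) - 2 * wsum w H1 - wsum w H2"
            by (simp add: sum_subtractf sum_distrib_left finP H1P H2P)
          finally show ?thesis using sumP by simp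
        qed
        moreover have "wsum w H1 \<le> \<alpha> * m" by (rule cent[OF H1P])
        moreover have "wsum w H2 \<le> \<alpha> * m" by (rule cent[OF H2P])
        moreover have "0 \<le> (2 - 3 * \<alpha>) * w c" using alpha wc0 by simp
        ultimately show ?thesis by (simp add: algebra_simps)
      qed
    qed
    show ?thesis using decomp lowb by linarith
  qed
  have ne: "{cost w T |T. is_search_tree E V T} \<noteq> {}"
    using st_exists[OF finV Vne, of E] by blast
  have OV: "OPT E V w = Inf {cost w T |T. is_search_tree E V T}" by (simp add: OPT_def)
  have "(2 - 3 * \<alpha>) * m + (3 * \<alpha> - 1) * w c + (\<Sum>H\<in>P. OPT E H w) \<le> Inf {cost w T |T. is_search_tree E V T}"
  proof (rule cInf_greatest[OF ne])
    fix x assume "x \<in> {cost w T |T. is_search_tree E V T}"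
    then obtain T where "is_search_tree E V T" "x = cost w T" by blast
    then show "(2 - 3 * \<alpha>) * m + (3 * \<alpha> - 1) * w c + (\<Sum>H\<in>P. OPT E H w) \<le> x" using key by simp
  qed
  then show ?thesis unfolding m_def P_def OV by simp
qed


end
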